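(* Fix $i\in\{1,2,3\}$ and constants $\sigma>0,\lambda>0,\rho>0$ with $\rho^{-2}\sigma<1$ and $\rho\le\lambda-2\rho^{-1}\sigma(1-\rho^{-2}\sigma)^{-1}$. Suppose that for some $p\in\mathbb{Z}_{>0}$ the matrix $\Theta_{p,i}$ satisfies $\Theta_{p,i}^{12}\Theta_{p,i}^{21}\le\sigma I$, $\Theta_{p,i}^{21}\Theta_{p,i}^{12}\le\sigma I$, $\Theta_{p,i}^{11}+\Theta_{p,i}^{22}\ge\lambda I$. Then for all $k\in\mathbb{Z}_{>0}$, $\Theta_{(k+1)p,i}^{11}\le\Theta_{kp,i}^{11}$, $\Theta_{(k+1)p,i}^{22}\le\Theta_{kp,i}^{22}$, $\Theta_{(k+1)p,i}^{12}\Theta_{(k+1)p,i}^{21}\le\Theta_{kp,i}^{12}\Theta_{kp,i}^{21}$, and $\Theta_{(k+1)p,i}^{21}\Theta_{(k+1)p,i}^{12}\le\Theta_{kp,i}^{21}\Theta_{kp,i}^{12}$.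
   Context: For the linear regulator problem with dynamics $x_{k+1}=Ax_k+Bw_k$ ($x_k\in\mathbb{R}^n$), running payoff $\tfrac12x^T\Phi x-\tfrac{\gamma^2}{2}|w|^2$ and basis functions $\psi^1(x,z)=z^Tx$, $\psi^2(x,z)=-\tfrac12(x-z)^TM(x-z)$, $\psi^3(x,z)=\delta(x-z)$, let $\mathrm{S}_{k,i}(x,z)$ be the $k$-step dynamic programming evolution of $\psi^i(\cdot,z)$ evaluated at $x$, and $\mathrm{B}_{k,i}(y,z)=-\sup_x\{\psi^i(x,y)-\mathrm{S}_{k,i}(x,z)\}=-\tfrac12[y;z]^T\Theta_{k,i}[y;z]$, with $\Theta_{k,i}=\begin{bmatrix}\Theta_{k,i}^{11}&\Theta_{k,i}^{12}\\\Theta_{k,i}^{21}&\Theta_{k,i}^{22}\end{bmatrix}$ symmetric ($n\times n$ blocks). These matrices satisfy $\Theta_{k_1+k_2,i}=\Theta_{k_1,i}\circledast\Theta_{k_2,i}$, where for symmetric $\Omega_1,\Omega_2\in\mathbb{R}^{2n\times2n}$ with $\Omega_1^{22}+\Omega_2^{11}>0$, $\Omega_1\circledast\Omega_2=\begin{bmatrix}\Omega_1^{11}&0\\0&\Omega_2^{22}\end{bmatrix}-\begin{bmatrix}\Omega_1^{12}\\\Omega_2^{21}\end{bmatrix}(\Omega_1^{22}+\Omega_2^{11})^{-1}\begin{bmatrix}\Omega_1^{21}&\Omega_2^{12}\end{bmatrix}$. *)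

theory Defs
  imports "HOL-Analysis.Analysis"
begin

text \<open>Real 2n x 2n matrices are represented as real^('n+'n)^('n+'n); the first copy
  of 'n (Inl) indexes the first block row/column, the second copy (Inr) the second.\<close>

definition blk11 :: "real^('n::finite + 'n)^('n + 'n) \<Rightarrow> real^'n^'n" where
  "blk11 M = (\<chi> i j. M $ Inl i $ Inl j)"
definition blk12 :: "real^('n::finite + 'n)^('n + 'n) \<Rightarrow> real^'n^'n" where
  "blk12 M = (\<chi> i j. M $ Inl i $ Inr j)"
definition blk21 :: "real^('n::finite + 'n)^('n + 'n) \<Rightarrow> real^'n^'n" where
  "blk21 M = (\<chi> i j. M $ Inr i $ Inl j)"
definition blk22 :: "real^('n::finite + 'n)^('n + 'n) \<Rightarrow> real^'n^'n" where
  "blk22 M = (\<chi> i j. M $ Inr i $ Inr j)"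

definition blocks :: "real^'n^'n \<Rightarrow> real^'n^'n \<Rightarrow> real^'n^'n \<Rightarrow> real^'n^'n
    \<Rightarrow> real^('n::finite + 'n)^('n + 'n)" where
  "blocks A B C D = (\<chi> r s. case r of
       Inl i \<Rightarrow> (case s of Inl j \<Rightarrow> A $ i $ j | Inr j \<Rightarrow> B $ i $ j)
     | Inr i \<Rightarrow> (case s of Inl j \<Rightarrow> C $ i $ j | Inr j \<Rightarrow> D $ i $ j))"

definition loewner_le :: "real^'n^'n \<Rightarrow> real^'n^'n \<Rightarrow> bool" (infix "\<preceq>\<^sub>L" 50) where
  "A \<preceq>\<^sub>L B \<longleftrightarrow> (\<forall>x::real^'n. x \<bullet> (A *v x) \<le> x \<bullet> (B *v x))"

definition pos_def :: "real^'n^'n \<Rightarrow> bool" where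
  "pos_def A \<longleftrightarrow> transpose A = A \<and> (\<forall>x::real^'n. x \<noteq> 0 \<longrightarrow> 0 < x \<bullet> (A *v x))"

definition circstar :: "real^('n::finite + 'n)^('n + 'n) \<Rightarrow> real^('n + 'n)^('n + 'n)
    \<Rightarrow> real^('n + 'n)^('n + 'n)" (infixl "\<circledast>" 70) where
  "O1 \<circledast> O2 = (let S = matrix_inv (blk22 O1 + blk11 O2) in
     blocks (blk11 O1 - blk12 O1 ** S ** blk21 O1)
            (- (blk12 O1 ** S ** blk12 O2))
            (- (blk21 O2 ** S ** blk21 O1))
            (blk22 O2 - blk21 O2 ** S ** blk12 O2))"

end

theory Submission
  imports Defs
begin


lemma inner_mv_T: "(x::real^'n) \<bullet> (A *v y) = (transpose A *v x) \<bullet> y"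
  by (simp add: dot_lmul_matrix)

lemma mv_mul: "(A ** B) *v x = A *v (B *v x)"
  by (simp add: matrix_vector_mul_assoc)

lemma neg_mul_neg: "(- (X::real^'n^'n)) ** (- Y) = X ** Y"
  by (simp add: vec_eq_iff matrix_matrix_mult_def sum_negf)

lemma scal_mv: "((c::real) *\<^sub>R mat 1) *v (x::real^'n) = c *\<^sub>R x"
proof -
  have "(\<Sum>j\<in>UNIV. c * (if i = j then 1 else 0) * x $ j) = c * x $ i" for i
  proof -
    have "(\<Sum>j\<in>UNIV. c * (if i = j then 1 else 0) * x $ j) = (\<Sum>j\<in>UNIV. if i = j then c * x$j else 0)"
      by (rule sum.cong) auto
    thus ?thesis by simp
  qed
  thus ?thesis by (simp add: vec_eq_iff matrix_vector_mult_def mat_def)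
qed

lemma blocks_simps:
  "blk11 (blocks A B C D) = A" "blk12 (blocks A B C D) = B"
  "blk21 (blocks A B C D) = C" "blk22 (blocks A B C D) = D"
  by (simp_all add: blk11_def blk12_def blk21_def blk22_def blocks_def vec_eq_iff)

lemma circ_simps:
  "blk11 (O1 \<circledast> O2) = blk11 O1 - blk12 O1 ** matrix_inv (blk22 O1 + blk11 O2) ** blk21 O1"
  "blk12 (O1 \<circledast> O2) = - (blk12 O1 ** matrix_inv (blk22 O1 + blk11 O2) ** blk12 O2)"
  "blk21 (O1 \<circledast> O2) = - (blk21 O2 ** matrix_inv (blk22 O1 + blk11 O2) ** blk21 O1)"
  "blk22 (O1 \<circledast> O2) = blk22 O2 - blk21 O2 ** matrix_inv (blk22 O1 + blk11 O2) ** blk12 O2"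
  by (simp_all add: circstar_def Let_def blocks_simps)

lemma blk_sym:
  assumes "transpose T = T"
  shows "blk21 T = transpose (blk12 T)"
proof -
  have "T $ Inr i $ Inl j = T $ Inl j $ Inr i" for i j
    using arg_cong[OF assms, of "\<lambda>M. M $ Inr i $ Inl j"] by (simp add: transpose_def)
  thus ?thesis by (simp add: blk21_def blk12_def transpose_def vec_eq_iff)
qed

lemma inv_props:
  fixes M :: "real^'n^'n"
  assumes r: "rho > 0" and ge: "\<And>z. rho * (z \<bullet> z) \<le> z \<bullet> (M *v z)"
  shows "M ** matrix_inv M = mat 1" "matrix_inv M ** M = mat 1"
    "\<And>y. norm (matrix_inv M *v y) \<le> norm y / rho"
    "\<And>y. 0 \<le> y \<bullet> (matrix_inv M *v y)"
proof -
  have inj: "\<forall>x. M *v x = 0 \<longrightarrow> x = 0"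
  proof (intro allI impI)
    fix x assume "M *v x = 0"
    with ge[of x] have "rho * (x \<bullet> x) \<le> 0" by simp
    with r have "x \<bullet> x \<le> 0" by (simp add: mult_le_0_iff)
    thus "x = 0" by (metis inner_eq_zero_iff inner_ge_zero order_antisym)
  qed
  hence "invertible M" using matrix_left_invertible_ker invertible_left_inverse by blast
  hence "\<exists>A'. M ** A' = mat 1 \<and> A' ** M = mat 1" by (simp add: invertible_def)
  hence I: "M ** matrix_inv M = mat 1 \<and> matrix_inv M ** M = mat 1"
    unfolding matrix_inv_def by (rule someI_ex)
  thus "M ** matrix_inv M = mat 1" "matrix_inv M ** M = mat 1" by auto
  fix y
  define z where "z = matrix_inv M *v y"
  have My: "M *v z = y" using I by (simp add: z_def mv_mul[symmetric])
  have "rho * (norm z)^2 \<le> z \<bullet> y" using ge[of z] My by (simp add: power2_norm_eq_inner)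
  also have "\<dots> \<le> norm z * norm y" by (simp add: norm_cauchy_schwarz)
  finally have A: "rho * (norm z)^2 \<le> norm z * norm y" .
  show "norm (matrix_inv M *v y) \<le> norm y / rho"
  proof (cases "norm z = 0")
    case True thus ?thesis using r by (simp add: z_def)
  next
    case False
    hence "norm z > 0" by simp
    with A have "rho * norm z \<le> norm y" by (simp add: power2_eq_square)
    thus ?thesis using r by (simp add: z_def field_simps)
  qed
  have "0 \<le> rho * (z \<bullet> z)" using r by simp
  also have "\<dots> \<le> z \<bullet> y" using ge[of z] My by simp
  finally show "0 \<le> y \<bullet> (matrix_inv M *v y)" by (simp add: z_def inner_commute)
qed

lemma inv_sym:
  fixes M S :: "real^'n^'n"
  assumes "M ** S = mat 1" "S ** M = mat 1" "transpose M = M"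
  shows "transpose S = S"
proof -
  have "transpose S ** M = mat 1" using assms
    by (metis matrix_transpose_mul transpose_mat)
  hence "transpose S = transpose S ** (M ** S)" using assms by simp
  also have "\<dots> = S" by (simp add: matrix_mul_assoc \<open>transpose S ** M = mat 1\<close>)
  finally show ?thesis .
qed

lemma H_dec:
  fixes A B S :: "real^'n^'n"
  assumes "\<And>y. 0 \<le> y \<bullet> (S *v y)" "Bt = transpose B"
  shows "A - B ** S ** Bt \<preceq>\<^sub>L A"
  unfolding loewner_le_def
proof
  fix x :: "real^'n"
  have "x \<bullet> ((B ** S ** Bt) *v x) = (Bt *v x) \<bullet> (S *v (Bt *v x))"
    by (simp add: mv_mul inner_mv_T[of x B] assms(2))
  also have "\<dots> \<ge> 0" using assms(1) .
  finally show "x \<bullet> ((A - B ** S ** Bt) *v x) \<le> x \<bullet> (A *v x)"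
    by (simp add: matrix_vector_mult_diff_rdistrib inner_diff_right)
qed

lemma R_bound:
  fixes C Ct S :: "real^'n^'n"
  assumes "Ct = transpose C" "\<And>y. norm (S *v y) \<le> norm y / rho" "rho > 0"
    "\<And>y. y \<bullet> ((Ct ** C) *v y) \<le> sg * (y \<bullet> y)"
  shows "x \<bullet> ((Ct ** S ** C) *v x) \<le> sg / rho * (x \<bullet> x)"
proof -
  let ?u = "C *v x"
  have e: "x \<bullet> ((Ct ** S ** C) *v x) = ?u \<bullet> (S *v ?u)"
    by (simp only: mv_mul assms(1) inner_mv_T[of x "transpose C"] transpose_transpose)
  have "?u \<bullet> (S *v ?u) \<le> norm ?u * norm (S *v ?u)" by (simp add: norm_cauchy_schwarz)
  also have "\<dots> \<le> norm ?u * (norm ?u / rho)" using assms(2)[of ?u] by (intro mult_left_mono) auto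
  also have "\<dots> = (?u \<bullet> ?u) / rho" by (simp add: power2_norm_eq_inner[symmetric] power2_eq_square)
  also have "?u \<bullet> ?u = x \<bullet> ((Ct ** C) *v x)"
    by (simp only: mv_mul assms(1) inner_mv_T[of x "transpose C"] transpose_transpose)
  also have "\<dots> / rho \<le> sg * (x \<bullet> x) / rho" using assms(3,4) by (simp add: divide_right_mono)
  finally show ?thesis using e by simp
qed

lemma G_bound:
  fixes B Bt S Q :: "real^'n^'n"
  assumes "Bt = transpose B" "transpose S = S" "\<And>y. norm (S *v y) \<le> norm y / rho"
    "\<And>y. y \<bullet> (Q *v y) \<le> sg * (y \<bullet> y)" "sg > 0" "sg < rho^2" "rho > 0"
  shows "B ** S ** Q ** S ** Bt \<preceq>\<^sub>L B ** Bt"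
  unfolding loewner_le_def
proof
  fix x :: "real^'n"
  let ?u = "Bt *v x"
  let ?w = "S *v ?u"
  have e1: "x \<bullet> ((B ** S ** Q ** S ** Bt) *v x) = ?u \<bullet> (S *v (Q *v ?w))"
    by (simp add: mv_mul assms(1) dot_lmul_matrix[symmetric])
  also have "\<dots> = ?w \<bullet> (Q *v ?w)"
    by (metis assms(2) inner_mv_T)
  also have "\<dots> \<le> sg * (?w \<bullet> ?w)" by (rule assms(4))
  also have "?w \<bullet> ?w = (norm ?w)^2" by (simp add: power2_norm_eq_inner)
  also have "sg * \<dots> \<le> sg * (norm ?u / rho)^2"
    using assms(3)[of ?u] assms(5) by (intro mult_left_mono power_mono) auto
  also have "\<dots> = (sg / rho^2) * (norm ?u)^2" by (simp add: power_divide)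
  also have "\<dots> \<le> 1 * (norm ?u)^2"
    using assms(5,6,7) by (intro mult_right_mono) auto
  also have "\<dots> = ?u \<bullet> ?u" by (simp add: power2_norm_eq_inner)
  also have "\<dots> = x \<bullet> ((B ** Bt) *v x)"
    by (simp add: mv_mul assms(1) dot_lmul_matrix[symmetric])
  finally show "x \<bullet> ((B ** S ** Q ** S ** Bt) *v x) \<le> x \<bullet> ((B ** Bt) *v x)" .
qed


lemma ar:
  fixes sigma lam rho :: real
  assumes sigma_pos: "sigma > 0" and rho_pos: "rho > 0"
    and rho_sigma: "sigma / rho\<^sup>2 < 1"
    and rho_le: "rho \<le> lam - 2 * (sigma / rho) / (1 - sigma / rho\<^sup>2)"
  shows "sigma / rho \<le> lam - rho" "sigma < rho^2" "rho \<le> lam"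
proof -
  have b0: "sigma / rho^2 > 0" using assms by simp
  have a0: "sigma / rho > 0" using assms by simp
  have "sigma / rho \<le> 2 * (sigma / rho)" using a0 by simp
  also have "\<dots> \<le> 2 * (sigma / rho) / (1 - sigma / rho\<^sup>2)"
  proof -
    have g: "\<And>c d::real. c > 0 \<Longrightarrow> 0 < d \<Longrightarrow> d \<le> 1 \<Longrightarrow> c \<le> c / d"
      by (simp add: le_divide_eq mult_left_le)
    show ?thesis using g[of "2 * (sigma / rho)" "1 - sigma / rho\<^sup>2"] a0 b0 rho_sigma by simp
  qed
  finally have "sigma / rho \<le> 2 * (sigma / rho) / (1 - sigma / rho\<^sup>2)" .
  thus "sigma / rho \<le> lam - rho" using rho_le by linarith
  thus "rho \<le> lam" using a0 by linarith
  show "sigma < rho^2" using rho_sigma rho_pos by (simp add: divide_less_eq)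
qed

theorem theorem4p3:
  fixes Theta :: "nat \<Rightarrow> real^('n::finite + 'n)^('n + 'n)"
    and sigma lam rho :: real and p :: nat
  assumes sym: "\<And>k. k \<ge> 1 \<Longrightarrow> transpose (Theta k) = Theta k"
    and semigroup: "\<And>k1 k2. k1 \<ge> 1 \<Longrightarrow> k2 \<ge> 1 \<Longrightarrow>
           pos_def (blk22 (Theta k1) + blk11 (Theta k2)) \<and> Theta (k1 + k2) = Theta k1 \<circledast> Theta k2"
    and sigma_pos: "sigma > 0" and lambda_pos: "lam > 0" and rho_pos: "rho > 0"
    and rho_sigma: "sigma / rho\<^sup>2 < 1"
    and rho_le: "rho \<le> lam - 2 * (sigma / rho) / (1 - sigma / rho\<^sup>2)"
    and p_pos: "p > 0"
    and h1: "blk12 (Theta p) ** blk21 (Theta p) \<preceq>\<^sub>L sigma *\<^sub>R mat 1"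
    and h2: "blk21 (Theta p) ** blk12 (Theta p) \<preceq>\<^sub>L sigma *\<^sub>R mat 1"
    and h3: "lam *\<^sub>R mat 1 \<preceq>\<^sub>L blk11 (Theta p) + blk22 (Theta p)"
  shows "\<forall>k::nat. k > 0 \<longrightarrow>
           blk11 (Theta ((k + 1) * p)) \<preceq>\<^sub>L blk11 (Theta (k * p))
         \<and> blk22 (Theta ((k + 1) * p)) \<preceq>\<^sub>L blk22 (Theta (k * p))
         \<and> blk12 (Theta ((k + 1) * p)) ** blk21 (Theta ((k + 1) * p))
             \<preceq>\<^sub>L blk12 (Theta (k * p)) ** blk21 (Theta (k * p))
         \<and> blk21 (Theta ((k + 1) * p)) ** blk12 (Theta ((k + 1) * p))
             \<preceq>\<^sub>L blk21 (Theta (k * p)) ** blk12 (Theta (k * p))"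
  proof -
  have p1: "p \<ge> 1" using p_pos by simp
  have kp1: "k * p \<ge> 1" if "k \<ge> 1" for k using p1 that by (simp add: one_le_mult_iff)
  have split1: "Theta ((k+1)*p) = Theta (k*p) \<circledast> Theta p" if "k \<ge> 1" for k
  proof -
    have e: "(k+1)*p = k*p + p" by simp
    show ?thesis unfolding e using semigroup[of "k*p" p] kp1[OF that] p1 by blast
  qed
  have split2: "Theta ((k+1)*p) = Theta p \<circledast> Theta (k*p)" if "k \<ge> 1" for k
  proof -
    have e: "(k+1)*p = p + k*p" by simp
    show ?thesis unfolding e using semigroup[of p "k*p"] kp1[OF that] p1 by blast
  qed
  have symb: "blk21 (Theta k) = transpose (blk12 (Theta k))" if "k \<ge> 1" for k
    using blk_sym sym that by blast
  have symb': "blk12 (Theta k) = transpose (blk21 (Theta k))" if "k \<ge> 1" for k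
    using symb[OF that] by simp
  define Mk where "Mk k = blk22 (Theta (k*p)) + blk11 (Theta p)" for k
  define Nk where "Nk k = blk22 (Theta p) + blk11 (Theta (k*p))" for k
  note ar = ar[OF sigma_pos rho_pos rho_sigma rho_le]
  have h1': "y \<bullet> ((blk12 (Theta p) ** blk21 (Theta p)) *v y) \<le> sigma * (y \<bullet> y)" for y
    using h1 by (simp add: loewner_le_def scal_mv)
  have h2': "y \<bullet> ((blk21 (Theta p) ** blk12 (Theta p)) *v y) \<le> sigma * (y \<bullet> y)" for y
    using h2 by (simp add: loewner_le_def scal_mv)
  have h3': "lam * (y \<bullet> y) \<le> y \<bullet> (blk11 (Theta p) *v y) + y \<bullet> (blk22 (Theta p) *v y)" for y
    using h3 by (simp add: loewner_le_def scal_mv matrix_vector_mult_add_rdistrib inner_add_right)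
  have bound: "(\<forall>z. rho * (z \<bullet> z) \<le> z \<bullet> (Mk k *v z)) \<and> (\<forall>z. rho * (z \<bullet> z) \<le> z \<bullet> (Nk k *v z))"
    if "k \<ge> 1" for k
    using that
  proof (induction k rule: nat_induct_at_least)
    case base
    have "rho * (z \<bullet> z) \<le> lam * (z \<bullet> z)" for z :: "real^'n"
      using ar(3) by (simp add: mult_right_mono)
    then show ?case using h3'
      by (auto simp: Mk_def Nk_def matrix_vector_mult_add_rdistrib inner_add_right intro: order_trans)
         (smt (verit))
  next
    case (Suc k)
    have k1: "k \<ge> 1" by fact
    have IM: "\<And>z. rho * (z \<bullet> z) \<le> z \<bullet> (Mk k *v z)" and IN: "\<And>z. rho * (z \<bullet> z) \<le> z \<bullet> (Nk k *v z)"
      using Suc.IH by auto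
    note SM = inv_props[OF rho_pos IM]
    note SN = inv_props[OF rho_pos IN]
    have eM: "Mk (Suc k) = blk22 (Theta p) - blk21 (Theta p) ** matrix_inv (Mk k) ** blk12 (Theta p) + blk11 (Theta p)"
      using split1[OF k1] by (simp add: Mk_def circ_simps)
    have eN: "Nk (Suc k) = blk22 (Theta p) + (blk11 (Theta p) - blk12 (Theta p) ** matrix_inv (Nk k) ** blk21 (Theta p))"
      using split2[OF k1] by (simp add: Nk_def circ_simps)
    have RM: "z \<bullet> ((blk21 (Theta p) ** matrix_inv (Mk k) ** blk12 (Theta p)) *v z) \<le> sigma / rho * (z \<bullet> z)" for z
      by (rule R_bound[OF symb[OF p1] SM(3) rho_pos h2'])
    have RN: "z \<bullet> ((blk12 (Theta p) ** matrix_inv (Nk k) ** blk21 (Theta p)) *v z) \<le> sigma / rho * (z \<bullet> z)" for z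
      by (rule R_bound[OF symb'[OF p1] SN(3) rho_pos h1'])
    have zz: "rho * (z \<bullet> z) \<le> (lam - sigma / rho) * (z \<bullet> z)" for z :: "real^'n"
      using ar(1) by (intro mult_right_mono) auto
    show ?case
    proof (intro conjI allI)
      fix z :: "real^'n"
      show "rho * (z \<bullet> z) \<le> z \<bullet> (Mk (Suc k) *v z)"
        using zz[of z] RM[of z] h3'[of z] unfolding eM
        by (simp add: matrix_vector_mult_add_rdistrib matrix_vector_mult_diff_rdistrib
            inner_add_right inner_diff_right algebra_simps)
      show "rho * (z \<bullet> z) \<le> z \<bullet> (Nk (Suc k) *v z)"
        using zz[of z] RN[of z] h3'[of z] unfolding eN
        by (simp add: matrix_vector_mult_add_rdistrib matrix_vector_mult_diff_rdistrib
            inner_add_right inner_diff_right algebra_simps)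
    qed
  qed
  show ?thesis
  proof (intro allI impI)
    fix k :: nat assume "k > 0"
    hence k1: "k \<ge> 1" by simp
    have IM: "\<And>z. rho * (z \<bullet> z) \<le> z \<bullet> (Mk k *v z)" and IN: "\<And>z. rho * (z \<bullet> z) \<le> z \<bullet> (Nk k *v z)"
      using bound[OF k1] by auto
    note SM = inv_props[OF rho_pos IM]
    note SN = inv_props[OF rho_pos IN]
    have tM: "transpose (Mk k) = Mk k"
      using semigroup[of "k*p" p] kp1[OF k1] p1 by (simp add: pos_def_def Mk_def)
    have tN: "transpose (Nk k) = Nk k"
      using semigroup[of p "k*p"] kp1[OF k1] p1 by (simp add: pos_def_def Nk_def)
    have sS: "transpose (matrix_inv (Mk k)) = matrix_inv (Mk k)" by (rule inv_sym[OF SM(1,2) tM])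
    have sS': "transpose (matrix_inv (Nk k)) = matrix_inv (Nk k)" by (rule inv_sym[OF SN(1,2) tN])
    have a: "blk11 (Theta ((k + 1) * p)) \<preceq>\<^sub>L blk11 (Theta (k * p))"
      using split1[OF k1] H_dec[OF SM(4) symb[OF kp1[OF k1]]]
      by (simp add: circ_simps Mk_def)
    have b: "blk22 (Theta ((k + 1) * p)) \<preceq>\<^sub>L blk22 (Theta (k * p))"
      using split2[OF k1] H_dec[OF SN(4) symb'[OF kp1[OF k1]]]
      by (simp add: circ_simps Nk_def)
    have c: "blk12 (Theta ((k + 1) * p)) ** blk21 (Theta ((k + 1) * p))
             \<preceq>\<^sub>L blk12 (Theta (k * p)) ** blk21 (Theta (k * p))"
      using split1[OF k1] G_bound[OF symb[OF kp1[OF k1]] sS SM(3) h1' sigma_pos ar(2) rho_pos]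
      by (simp add: circ_simps Mk_def neg_mul_neg matrix_mul_assoc)
    have d: "blk21 (Theta ((k + 1) * p)) ** blk12 (Theta ((k + 1) * p))
             \<preceq>\<^sub>L blk21 (Theta (k * p)) ** blk12 (Theta (k * p))"
      using split2[OF k1] G_bound[OF symb'[OF kp1[OF k1]] sS' SN(3) h2' sigma_pos ar(2) rho_pos]
      by (simp add: circ_simps Nk_def neg_mul_neg matrix_mul_assoc)
    show "blk11 (Theta ((k + 1) * p)) \<preceq>\<^sub>L blk11 (Theta (k * p))
         \<and> blk22 (Theta ((k + 1) * p)) \<preceq>\<^sub>L blk22 (Theta (k * p))
         \<and> blk12 (Theta ((k + 1) * p)) ** blk21 (Theta ((k + 1) * p))
             \<preceq>\<^sub>L blk12 (Theta (k * p)) ** blk21 (Theta (k * p))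
         \<and> blk21 (Theta ((k + 1) * p)) ** blk12 (Theta ((k + 1) * p))
             \<preceq>\<^sub>L blk21 (Theta (k * p)) ** blk12 (Theta (k * p))"
      using a b c d by blast
  qed
qed

end
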